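(* Let $A$ be an $n\times n$ real matrix with $\operatorname{sign}\det A=(-1)^n$, and assume $A$ has a Hurwitz-stable $(n-1)\times(n-1)$ principal submatrix. Then there exists a positive diagonal matrix $D$ such that $AD$ is Hurwitz-stable.
   Context: A square matrix is Hurwitz-stable if all its eigenvalues have negative real part. *)

theory Defs
  imports "Jordan_Normal_Form.Char_Poly" "Jordan_Normal_Form.DL_Submatrix"
begin

definition hurwitz_stable :: "real mat \<Rightarrow> bool" where
  "hurwitz_stable A \<longleftrightarrow> square_mat A \<and>
     (\<forall>\<mu>. eigenvalue (map_mat complex_of_real A) \<mu> \<longrightarrow> Re \<mu> < 0)"

definition principal_del :: "'a mat \<Rightarrow> nat \<Rightarrow> 'a mat" where
  "principal_del A k = submatrix A ({0..<dim_row A} - {k}) ({0..<dim_col A} - {k})"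

definition positive_diagonal :: "real mat \<Rightarrow> bool" where
  "positive_diagonal D \<longleftrightarrow> square_mat D \<and> diagonal_mat D \<and>
     (\<forall>i<dim_row D. D $$ (i,i) > 0)"

end

theory Submission imports Defs "HOL-Analysis.Topology_Euclidean_Space" begin

lemma pick_del:
  assumes "k < n" "i < n - 1"
  shows "pick ({0..<n} - {k}) i = (if i < k then i else Suc i)"
proof -
  let ?I = "{0..<n} - {k}"
  define j where "j = (if i < k then i else Suc i)"
  have jI: "j \<in> ?I" using assms by (auto simp: j_def)
  have "{a\<in>?I. a < j} = (if i<k then {0..<i} else {0..<Suc i} - {k})"
    using assms by (auto simp: j_def)
  hence "card {a\<in>?I. a < j} = i" using assms by auto
  thus ?thesis using pick_card_in_set[OF jI] by (simp add: j_def)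
qed

lemma principal_del_eq:
  assumes A: "A \<in> carrier_mat n n" and k: "k < n"
  shows "principal_del A k = mat_delete A k k"
proof -
  have c: "card {i. i < n \<and> i \<in> {0..<n} - {k}} = n - 1"
  proof -
    have "{i. i < n \<and> i \<in> {0..<n} - {k}} = {0..<n} - {k}" by auto
    thus ?thesis using k by simp
  qed
  show ?thesis
    unfolding principal_del_def
    apply (rule eq_matI)
    using A k c by (auto simp: dim_submatrix submatrix_index pick_del mat_delete_def)
qed

definition cm :: "'a::comm_ring_1 mat \<Rightarrow> 'a \<Rightarrow> 'a mat" where
  "cm M x = Matrix.mat (dim_row M) (dim_row M) (\<lambda>(i,j). (if i = j then x else 0) - M $$ (i,j))"

lemma cm_carrier[simp]: "M \<in> carrier_mat n n \<Longrightarrow> cm M x \<in> carrier_mat n n"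
  unfolding cm_def by auto

lemma poly_char_poly_cm:
  assumes A: "(M :: 'a :: comm_ring_1 mat) \<in> carrier_mat n n"
  shows "poly (char_poly M) x = det (cm M x)"
  unfolding char_poly_def
  by (rule poly_det_cong[of _ n], insert A, auto simp: char_poly_matrix_def cm_def)


lemma key_identity:
  fixes B :: "'a :: field mat"
  assumes B: "B \<in> carrier_mat n n" and k: "k < n"
  shows "poly (char_poly (Matrix.mat n n (\<lambda>(i,j). B $$ (i,j) * (if j = k then e else 1)))) x
    = (1 - e) * x * poly (char_poly (mat_delete B k k)) x + e * poly (char_poly B) x"
proof -
  define Bd where "Bd = Matrix.mat n n (\<lambda>(i,j). B $$ (i,j) * (if j = k then e else 1))"
  have Bd: "Bd \<in> carrier_mat n n" unfolding Bd_def by auto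
  define N1 where "N1 = cm B x"
  define Ne where "Ne = cm Bd x"
  have N1: "N1 \<in> carrier_mat n n" and Ne: "Ne \<in> carrier_mat n n"
    using B Bd unfolding N1_def Ne_def by auto
  have del: "mat_delete Ne i k = mat_delete N1 i k" if i: "i < n" for i
    apply (rule eq_matI)
    using B k i by (auto simp: mat_delete_def Ne_def N1_def cm_def Bd_def)
  define cof where "cof i = cofactor N1 i k" for i
  have cofe: "cofactor Ne i k = cof i" if "i < n" for i
    unfolding cof_def cofactor_def using del[OF that] by simp
  have "det Ne = (\<Sum>i<n. Ne $$ (i,k) * cofactor Ne i k)"
    by (rule laplace_expansion_column[OF Ne k])
  also have "\<dots> = (\<Sum>i<n. ((if i = k then x else 0) - e * B $$ (i,k)) * cof i)"
  proof (rule sum.cong[OF refl])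
    fix i assume "i \<in> {..<n}"
    hence i: "i < n" by simp
    have "Ne $$ (i,k) = (if i = k then x else 0) - e * B $$ (i,k)"
      using i k B by (auto simp: Ne_def cm_def Bd_def)
    thus "Ne $$ (i, k) * cofactor Ne i k = ((if i = k then x else 0) - e * B $$ (i, k)) * cof i"
      using cofe[OF i] by simp
  qed
  also have "\<dots> = (\<Sum>i<n. (if i = k then x * cof i else 0) - e * (B $$ (i,k) * cof i))"
    by (rule sum.cong) (auto simp: algebra_simps)
  also have "\<dots> = (\<Sum>i<n. (if i = k then x * cof i else 0)) - e * (\<Sum>i<n. B $$ (i,k) * cof i)"
    by (simp add: sum_subtractf sum_distrib_left)
  also have "(\<Sum>i<n. (if i = k then x * cof i else 0)) = x * cof k"
    using k by simp
  finally have e1: "det Ne = x * cof k - e * (\<Sum>i<n. B $$ (i,k) * cof i)" .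
  have "det N1 = (\<Sum>i<n. N1 $$ (i,k) * cofactor N1 i k)"
    by (rule laplace_expansion_column[OF N1 k])
  also have "\<dots> = (\<Sum>i<n. ((if i = k then x else 0) - B $$ (i,k)) * cof i)"
  proof (rule sum.cong[OF refl])
    fix i assume "i \<in> {..<n}"
    hence i: "i < n" by simp
    have "N1 $$ (i,k) = (if i = k then x else 0) - B $$ (i,k)"
      using i k B by (auto simp: N1_def cm_def)
    thus "N1 $$ (i, k) * cofactor N1 i k = ((if i = k then x else 0) - B $$ (i, k)) * cof i"
      unfolding cof_def by simp
  qed
  also have "\<dots> = (\<Sum>i<n. (if i = k then x * cof i else 0) - (B $$ (i,k) * cof i))"
    by (rule sum.cong) (auto simp: algebra_simps)
  also have "\<dots> = (\<Sum>i<n. (if i = k then x * cof i else 0)) - (\<Sum>i<n. B $$ (i,k) * cof i)"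
    by (simp add: sum_subtractf)
  also have "(\<Sum>i<n. (if i = k then x * cof i else 0)) = x * cof k"
    using k by simp
  finally have e2: "det N1 = x * cof k - (\<Sum>i<n. B $$ (i,k) * cof i)" .
  have md: "mat_delete N1 k k = cm (mat_delete B k k) x"
    apply (rule eq_matI)
    using B k by (auto simp: mat_delete_def N1_def cm_def)
  have "cof k = det (cm (mat_delete B k k) x)"
    unfolding cof_def cofactor_def md by simp
  also have "\<dots> = poly (char_poly (mat_delete B k k)) x"
    by (rule poly_char_poly_cm[symmetric], rule mat_delete_carrier[OF B])
  finally have ck: "cof k = poly (char_poly (mat_delete B k k)) x" .
  define S where "S = (\<Sum>i<n. B $$ (i,k) * cof i)"
  have h1: "poly (char_poly Bd) x = x * cof k - e * S" unfolding Ne_def S_def e1[symmetric]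
    by (rule poly_char_poly_cm[OF Bd])
  have h2: "poly (char_poly B) x = x * cof k - S" unfolding N1_def S_def e2[symmetric]
    by (rule poly_char_poly_cm[OF B])
  show ?thesis unfolding Bd_def[symmetric] h1 h2 ck[symmetric]
    by (simp add: algebra_simps)
qed


lemma eig_bound:
  fixes M :: "complex mat"
  assumes M: "M \<in> carrier_mat n n" and ev: "eigenvalue M mu"
  shows "norm mu \<le> (\<Sum>i<n. \<Sum>j<n. norm (M $$ (i,j)))"
proof -
  from ev obtain v where v: "v \<in> carrier_vec n" "v \<noteq> 0\<^sub>v n" "M *\<^sub>v v = mu \<cdot>\<^sub>v v"
    unfolding eigenvalue_def eigenvector_def using M by auto
  obtain j0 where j0: "j0 < n" "v $ j0 \<noteq> 0"
  proof -
    have "\<exists>j<n. v $ j \<noteq> 0"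
    proof (rule ccontr)
      assume "\<not> ?thesis"
      hence "v = 0\<^sub>v n" using v(1) by (intro eq_vecI) auto
      with v(2) show False by simp
    qed
    thus ?thesis using that by blast
  qed
  define S where "S = (\<lambda>j. norm (v $ j)) ` {..<n}"
  have fS: "finite S" "S \<noteq> {}" using j0 by (auto simp: S_def)
  obtain i where i: "i < n" "norm (v $ i) = Max S"
    using Max_in[OF fS] unfolding S_def by auto
  have mx: "norm (v $ j) \<le> norm (v $ i)" if "j < n" for j
    using Max_ge[OF fS(1), of "norm (v $ j)"] that i(2) unfolding S_def by auto
  have pos: "norm (v $ i) > 0" using mx[OF j0(1)] j0(2) by auto
  have "mu * v $ i = (M *\<^sub>v v) $ i" using v(3) i v(1) by simp
  also have "\<dots> = (\<Sum>j<n. M $$ (i,j) * v $ j)"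
    using M v(1) i by (auto simp: scalar_prod_def lessThan_atLeast0 intro!: sum.cong)
  finally have eq: "mu * v $ i = (\<Sum>j<n. M $$ (i,j) * v $ j)" .
  have "norm mu * norm (v $ i) = norm (\<Sum>j<n. M $$ (i,j) * v $ j)"
    by (simp add: eq[symmetric] norm_mult)
  also have "\<dots> \<le> (\<Sum>j<n. norm (M $$ (i,j)) * norm (v $ j))"
    by (rule order.trans[OF norm_sum]) (simp add: norm_mult)
  also have "\<dots> \<le> (\<Sum>j<n. norm (M $$ (i,j)) * norm (v $ i))"
    by (rule sum_mono) (auto intro: mult_left_mono mx)
  also have "\<dots> = (\<Sum>j<n. norm (M $$ (i,j))) * norm (v $ i)"
    by (simp add: sum_distrib_right)
  finally have "norm mu \<le> (\<Sum>j<n. norm (M $$ (i,j)))"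
    using pos by simp
  also have "\<dots> \<le> (\<Sum>i<n. \<Sum>j<n. norm (M $$ (i,j)))"
    by (rule member_le_sum[of i "{..<n}" "\<lambda>i. \<Sum>j<n. norm (M $$ (i,j))"]) (auto intro: sum_nonneg i)
  finally show ?thesis .
qed

lemma core:
  fixes c P :: "complex \<Rightarrow> complex" and c0 p0 R :: real
  assumes cc: "continuous_on UNIV c" and cP: "continuous_on UNIV P"
   and c0: "c 0 = of_real c0" "c0 > 0" and p0: "P 0 = of_real p0" "p0 > 0"
   and cnz: "\<And>z. Re z \<ge> 0 \<Longrightarrow> c z \<noteq> 0"
  shows "\<exists>\<epsilon>>0. \<epsilon> < 1 \<and> (\<forall>z. Re z \<ge> 0 \<longrightarrow> norm z \<le> R \<longrightarrow>
           (1 - of_real \<epsilon>) * z * c z + of_real \<epsilon> * P z \<noteq> 0)"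
proof -
  define h where "h z = P z / c z" for z
  have ic: "isCont c 0" "isCont P 0"
    using cc cP by (auto simp: continuous_on_eq_continuous_at)
  have ih: "isCont h 0" unfolding h_def
    using ic c0 by (intro isCont_divide) auto
  have h0: "h 0 = of_real (p0 / c0)" unfolding h_def c0 p0 by simp
  have r0: "p0 / c0 > 0" using c0 p0 by simp
  obtain \<delta> where d: "\<delta> > 0" and dh: "\<And>z. norm z < \<delta> \<Longrightarrow> norm (h z - h 0) < p0 / c0"
  proof -
    from LIM_D[OF ih[unfolded isCont_def] r0] obtain s where s: "s > 0"
      "\<forall>x. x \<noteq> 0 \<and> norm (x - 0) < s \<longrightarrow> norm (h x - h 0) < p0 / c0" by auto
    show ?thesis
    proof (rule that[OF s(1)])
      fix z :: complex assume "norm z < s"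
      thus "norm (h z - h 0) < p0 / c0" using s(2) r0 by (cases "z = 0") auto
    qed
  qed
  have reh: "Re (h z) > 0" if "norm z < \<delta>" for z
  proof -
    have "\<bar>Re (h z - h 0)\<bar> < p0 / c0" using abs_Re_le_cmod[of "h z - h 0"] dh[OF that] by linarith
    thus ?thesis unfolding h0 by simp
  qed
  define K where "K = {z. 0 \<le> Re z \<and> \<delta> \<le> norm z \<and> norm z \<le> R}"
  have cK: "compact K"
  proof -
    have "closed K" unfolding K_def
      by (intro closed_Collect_conj closed_Collect_le continuous_intros)
    moreover have "bounded K" unfolding K_def bounded_iff by auto
    ultimately show ?thesis by (simp add: compact_eq_bounded_closed)
  qed
  have contK: "continuous_on K (\<lambda>z. norm (z * c z))"
    by (intro continuous_intros continuous_on_subset[OF cc]) auto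
  have posK: "norm (z * c z) > 0" if "z \<in> K" for z
    using that d cnz[of z] unfolding K_def by auto
  obtain m where m: "m > 0" "\<And>z. z \<in> K \<Longrightarrow> m \<le> norm (z * c z)"
  proof (cases "K = {}")
    case True thus ?thesis using that[of 1] by auto
  next
    case False
    from continuous_attains_inf[OF cK False contK] obtain x where
      "x \<in> K" "\<forall>y\<in>K. norm (x * c x) \<le> norm (y * c y)" by auto
    thus ?thesis using that[of "norm (x * c x)"] posK by auto
  qed
  obtain M where M: "M \<ge> 0" "\<And>z. z \<in> K \<Longrightarrow> norm (P z) \<le> M"
  proof -
    have "compact (P ` K)"
      by (rule compact_continuous_image[OF continuous_on_subset[OF cP] cK]) auto
    then obtain a where "\<forall>x\<in>P ` K. norm x \<le> a" using compact_imp_bounded bounded_iff by metis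
    thus ?thesis using that[of "max a 0"] by fastforce
  qed
  define \<epsilon> where "\<epsilon> = min (1/2) (m / (4 * (M + 1)))"
  have e0: "\<epsilon> > 0" "\<epsilon> \<le> 1/2" "\<epsilon> \<le> m / (4 * (M + 1))" unfolding \<epsilon>_def using m M by (auto simp: min_def)
  have eM: "\<epsilon> * M \<le> m / 4"
  proof -
    have "\<epsilon> * M \<le> m / (4 * (M + 1)) * M" using e0 M by (intro mult_right_mono) auto
    also have "\<dots> \<le> m / 4" using m M by (simp add: field_simps)
    finally show ?thesis .
  qed
  have main: "(1 - of_real \<epsilon>) * z * c z + of_real \<epsilon> * P z \<noteq> 0"
    if z: "Re z \<ge> 0" "norm z \<le> R" for z
  proof
    assume eq: "(1 - of_real \<epsilon>) * z * c z + of_real \<epsilon> * P z = 0"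
    show False
    proof (cases "norm z < \<delta>")
      case True
      have cz: "c z \<noteq> 0" using cnz z by auto
      have e1: "(1 - complex_of_real \<epsilon>) \<noteq> 0"
      proof -
        have "(1 - complex_of_real \<epsilon>) = of_real (1 - \<epsilon>)" by simp
        moreover have "1 - \<epsilon> \<noteq> 0" using e0 by linarith
        ultimately show ?thesis by simp
      qed
      define r where "r = \<epsilon> / (1 - \<epsilon>)"
      have "z = - (of_real r * h z)"
        using eq cz e1 unfolding h_def r_def by (simp add: field_simps)
      hence "Re z = Re (- (of_real r * h z))" by (rule arg_cong)
      also have "\<dots> = - (r * Re (h z))" by simp
      finally have "Re z = - (r * Re (h z))" .
      moreover have "r > 0" using e0 unfolding r_def by simp
      ultimately have "Re z < 0" using reh[OF True] by (simp add: mult_pos_pos)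
      thus False using z by simp
    next
      case False
      hence zK: "z \<in> K" using z unfolding K_def by auto
      have "norm ((1 - of_real \<epsilon>) * (z * c z)) = norm (of_real \<epsilon> * P z)"
      proof -
        have "(1 - of_real \<epsilon>) * (z * c z) = - (of_real \<epsilon> * P z)"
          using eq by (simp add: eq_neg_iff_add_eq_0 mult.assoc)
        thus ?thesis by (metis norm_minus_cancel)
      qed
      hence "(1 - \<epsilon>) * norm (z * c z) = \<epsilon> * norm (P z)"
      proof -
        have "1 - complex_of_real \<epsilon> = of_real (1 - \<epsilon>)" by simp
        hence "norm (1 - complex_of_real \<epsilon>) = \<bar>1 - \<epsilon>\<bar>" by (metis norm_of_real)
        hence "norm (1 - complex_of_real \<epsilon>) = 1 - \<epsilon>" using e0 by linarith
        thus ?thesis using \<open>norm ((1 - of_real \<epsilon>) * (z * c z)) = norm (of_real \<epsilon> * P z)\<close> e0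
          by (simp add: norm_mult)
      qed
      moreover have "(1 - \<epsilon>) * norm (z * c z) \<ge> (1/2) * m"
        using m(2)[OF zK] e0 m(1) by (intro mult_mono) auto
      moreover have "\<epsilon> * norm (P z) \<le> \<epsilon> * M"
        using M(2)[OF zK] e0 by (intro mult_left_mono) auto
      ultimately show False using eM m(1) by linarith
    qed
  qed
  show ?thesis using e0 main by (intro exI[of _ \<epsilon>]) auto
qed


theorem mainTheorem7:
  fixes A :: "real mat" and n :: nat
  assumes "A \<in> carrier_mat n n"
    and "sgn (det A) = (-1) ^ n"
    and "\<exists>k<n. hurwitz_stable (principal_del A k)"
  shows "\<exists>D \<in> carrier_mat n n. positive_diagonal D \<and> hurwitz_stable (A * D)"
proof -
  note A = assms(1)
  from assms(3) obtain k where k: "k < n" and hs: "hurwitz_stable (principal_del A k)" by auto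
  define A' where "A' = mat_delete A k k"
  have A': "A' \<in> carrier_mat (n-1) (n-1)" unfolding A'_def by (rule mat_delete_carrier[OF A])
  have hs': "hurwitz_stable A'" using hs principal_del_eq[OF A k] unfolding A'_def by simp
  define B where "B = map_mat complex_of_real A"
  have B: "B \<in> carrier_mat n n" unfolding B_def using A by simp
  have Bdel: "mat_delete B k k = map_mat complex_of_real A'"
    unfolding B_def A'_def by (rule eq_matI) (use A k in \<open>auto simp: mat_delete_def\<close>)
  define pR where "pR = char_poly A'"
  have cpdel: "char_poly (mat_delete B k k) = map_poly complex_of_real pR"
    unfolding Bdel pR_def by (rule of_real_hom.char_poly_hom[OF A'])
  have cpB: "char_poly B = map_poly complex_of_real (char_poly A)"
    unfolding B_def by (rule of_real_hom.char_poly_hom[OF A])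
  define c where "c z = poly (char_poly (mat_delete B k k)) z" for z
  define P where "P z = poly (char_poly B) z" for z
  have cnz: "c z \<noteq> 0" if "Re z \<ge> 0" for z
  proof
    assume "c z = 0"
    hence "eigenvalue (map_mat complex_of_real A') z"
      unfolding c_def Bdel using eigenvalue_root_char_poly[of "map_mat complex_of_real A'" "n-1" z] A'
      by simp
    with hs' have "Re z < 0" unfolding hurwitz_stable_def by auto
    with that show False by simp
  qed
  have creal: "c (of_real t) = of_real (poly pR t)" for t
    unfolding c_def cpdel by (rule of_real_hom.poly_map_poly)
  have pRnz: "poly pR t \<noteq> 0" if "t \<ge> 0" for t
    using cnz[of "of_real t"] that creal[of t] by auto
  have lc: "lead_coeff pR = 1"
    using degree_monic_char_poly[OF A'] unfolding pR_def by simp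
  obtain N where N: "\<And>x. x \<ge> N \<Longrightarrow> poly pR x \<ge> 1"
    using poly_pinfty_gt_lc[of pR] lc by auto
  define T where "T = max N 1"
  have T: "T > 0" "poly pR T > 0" using N[of T] unfolding T_def by auto
  have c0: "poly pR 0 > 0"
  proof (rule ccontr)
    assume "\<not> ?thesis"
    with pRnz[of 0] have "poly pR 0 < 0" by simp
    from poly_IVT_pos[OF T(1) this T(2)] obtain x where "0 < x" "poly pR x = 0" by auto
    with pRnz[of x] show False by simp
  qed
  have c0': "c 0 = of_real (poly pR 0)" using creal[of 0] by simp
  have cmA: "cm A 0 = (-1) \<cdot>\<^sub>m A"
    by (rule eq_matI) (use A in \<open>auto simp: cm_def\<close>)
  have pA0: "poly (char_poly A) 0 = (-1)^n * det A"
    using poly_char_poly_cm[OF A, of 0] cmA A by simp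
  have p0: "(-1)^n * det A > 0"
  proof -
    have "det A \<noteq> 0" using assms(2) by (cases "det A = 0") auto
    thus ?thesis using assms(2)[symmetric] by (simp add: sgn_real_def split: if_splits)
  qed
  have P0: "P 0 = of_real ((-1)^n * det A)"
    unfolding P_def cpB using of_real_hom.poly_map_poly[of "char_poly A" 0] pA0 by simp
  have cc: "continuous_on UNIV c" unfolding c_def by (intro continuous_intros)
  have cP: "continuous_on UNIV P" unfolding P_def by (intro continuous_intros)
  define R where "R = (\<Sum>i<n. \<Sum>j<n. \<bar>A $$ (i,j)\<bar>)"
  from core[OF cc cP c0' c0 P0 p0 cnz, of R] obtain \<epsilon> :: real where
    e: "\<epsilon> > 0" "\<epsilon> < 1" and
    ne: "\<And>z. Re z \<ge> 0 \<Longrightarrow> norm z \<le> R \<Longrightarrow> (1 - of_real \<epsilon>) * z * c z + of_real \<epsilon> * P z \<noteq> 0"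
    by blast
  define D where "D = Matrix.mat n n (\<lambda>(i,j). if i = j then (if i = k then \<epsilon> else 1) else (0::real))"
  have D: "D \<in> carrier_mat n n" unfolding D_def by simp
  have pd: "positive_diagonal D"
    unfolding positive_diagonal_def diagonal_mat_def D_def using e by auto
  have AD: "A * D \<in> carrier_mat n n" using A D by simp
  have ADe: "(A * D) $$ (i,j) = A $$ (i,j) * (if j = k then \<epsilon> else 1)" if ij: "i < n" "j < n" for i j
  proof -
    have "(A * D) $$ (i,j) = (\<Sum>l\<in>{0..<n}. A $$ (i,l) * D $$ (l,j))"
      using A D ij by (simp add: scalar_prod_def)
    also have "\<dots> = (\<Sum>l\<in>{0..<n}. if l = j then A $$ (i,j) * (if j = k then \<epsilon> else 1) else 0)"
      by (rule sum.cong) (use ij in \<open>auto simp: D_def\<close>)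
    also have "\<dots> = A $$ (i,j) * (if j = k then \<epsilon> else 1)" using ij by simp
    finally show ?thesis .
  qed
  define E where "E = map_mat complex_of_real (A * D)"
  have E: "E \<in> carrier_mat n n" unfolding E_def using AD by simp
  have Eeq: "E = Matrix.mat n n (\<lambda>(i,j). B $$ (i,j) * (if j = k then of_real \<epsilon> else 1))"
  proof (rule eq_matI)
    fix i j assume "i < dim_row (Matrix.mat n n (\<lambda>(i,j). B $$ (i,j) * (if j = k then complex_of_real \<epsilon> else 1)))"
      "j < dim_col (Matrix.mat n n (\<lambda>(i,j). B $$ (i,j) * (if j = k then complex_of_real \<epsilon> else 1)))"
    hence ij: "i < n" "j < n" by auto
    have dAD: "dim_row (A * D) = n" "dim_col (A * D) = n" using AD by auto
    have dA: "dim_row A = n" "dim_col A = n" using A by auto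
    have "E $$ (i,j) = of_real ((A * D) $$ (i,j))" using ij dAD by (simp add: E_def)
    also have "\<dots> = of_real (A $$ (i,j) * (if j = k then \<epsilon> else 1))" by (simp only: ADe[OF ij])
    also have "\<dots> = B $$ (i,j) * (if j = k then of_real \<epsilon> else 1)" using ij dA by (simp add: B_def)
    finally show "E $$ (i,j) = Matrix.mat n n (\<lambda>(i,j). B $$ (i,j) * (if j = k then complex_of_real \<epsilon> else 1)) $$ (i,j)"
      using ij by simp
  qed (use E in auto)
  have "hurwitz_stable (A * D)"
    unfolding hurwitz_stable_def
  proof (intro conjI allI impI)
    show "square_mat (A * D)" using A D by simp
    fix mu assume ev: "eigenvalue (map_mat complex_of_real (A * D)) mu"
    show "Re mu < 0"
    proof (rule ccontr)
      assume "\<not> Re mu < 0"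
      hence re: "Re mu \<ge> 0" by simp
      have "norm mu \<le> (\<Sum>i<n. \<Sum>j<n. norm (E $$ (i,j)))"
        by (rule eig_bound[OF E]) (use ev in \<open>simp add: E_def\<close>)
      also have "\<dots> \<le> R" unfolding R_def
      proof (intro sum_mono)
        fix i j assume "i \<in> {..<n}" "j \<in> {..<n}"
        hence ij: "i < n" "j < n" by auto
        have "norm (E $$ (i,j)) = \<bar>A $$ (i,j) * (if j = k then \<epsilon> else 1)\<bar>"
        proof -
          have "dim_row (A * D) = n" "dim_col (A * D) = n" using AD by auto
          hence "E $$ (i,j) = of_real ((A * D) $$ (i,j))" using ij by (simp add: E_def)
          thus ?thesis by (simp only: ADe[OF ij] norm_of_real)
        qed
        also have "\<dots> \<le> \<bar>A $$ (i,j)\<bar>" using e mult_left_le[of \<epsilon> "\<bar>A $$ (i,j)\<bar>"] by (auto simp: abs_mult)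
        finally show "norm (E $$ (i,j)) \<le> \<bar>A $$ (i,j)\<bar>" .
      qed
      finally have nb: "norm mu \<le> R" .
      have "poly (char_poly E) mu = 0"
        using ev eigenvalue_root_char_poly[OF E] unfolding E_def by simp
      hence "(1 - of_real \<epsilon>) * mu * c mu + of_real \<epsilon> * P mu = 0"
        unfolding Eeq key_identity[OF B k] c_def P_def .
      with ne[OF re nb] show False by simp
    qed
  qed
  with D pd show ?thesis by blast
qed

end
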